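(* Run the generalized SMO algorithm with $\tau=0$ from some $\theta^0\in\mathcal F$ and suppose it never stops, i.e. $\Delta^k>0$ for all $k$. Then there are infinitely many iterations $k$ at which the update is not clipped.
   Context: Setup. Let $n,p,k_1,k_2\ge1$, $X\in\mathbb{R}^{n\times p}$ with rows $X_{i:}$, $y\in\mathbb{R}^n$, $C>0$, $\nu\in(0,1]$, $A\in\mathbb{R}^{k_1\times p}$, $b\in\mathbb{R}^{k_1}$, $\Gamma\in\mathbb{R}^{k_2\times p}$, $d\in\mathbb{R}^{k_2}$; $\mathbf e$ is the all-ones vector and $Q=XX^T\in\mathbb{R}^{n\times n}$. Dual variables are $\theta=(\alpha,\alpha^*,\gamma,\mu)\in\mathbb{R}^n\times\mathbb{R}^n\times\mathbb{R}^{k_1}\times\mathbb{R}^{k_2}$. Let $M$ be the $(2n+k_1+k_2)\times p$ matrix with row blocks $X,-X,A,-\Gamma$, $\bar Q=MM^T$, $l=(y,-y,b,-d)$, and $f(\theta)=\frac12\theta^T\bar Q\theta+l^T\theta$. The feasible set $\mathcal F$ consists of $\theta$ with $0\le\alpha_i,\alpha_i^*\le C/n$ for all $i$, $\mathbf e^T(\alpha+\alpha^* )\le C\nu$, $\mathbf e^T(\alpha-\alpha^* )=0$, $\gamma_j\ge0$ for all $j$. Generalized SMO algorithm. Assume the rows of $X$ are pairwise distinct and no row of $A$ or $\Gamma$ is zero. Let $I_{up}(\alpha)=\{i:\alpha_i<C/n\}$, $I_{low}(\alpha)=\{i:\alpha_i>0\}$, and $I^*_{up},I^*_{low}$ the same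 sets for $\alpha^*$. Fix $\tau\ge0$ and $\theta^0\in\mathcal F$. At iteration $k$, with all gradients evaluated at $\theta^k$: pick $i\in\arg\min_{I_{up}(\alpha^k)}\nabla_{\alpha_i}f$, $j\in\arg\max_{I_{low}(\alpha^k)}\nabla_{\alpha_j}f$ and set $\Delta_1=\max(\nabla_{\alpha_j}f-\nabla_{\alpha_i}f,0)$ ($\Delta_1=0$ if either set is empty); define $i^*,j^*,\Delta_2$ identically for $\alpha^*$; $\Delta_3=\max(-\min_{s}\nabla_{\gamma_s}f,0)$; $\Delta_4=\max_s|\nabla_{\mu_s}f|$; $\Delta^k=\max(\Delta_1,\Delta_2,\Delta_3,\Delta_4)$. If $\Delta^k\le\tau$ stop; otherwise update the first block (in the order $\alpha,\alpha^*,\gamma,\mu$) whose $\Delta_m$ equals $\Delta^k$, leaving all other coordinates unchanged: Block $\alpha$: $t_q=-\frac{\nabla_{\alpha_i}f-\nabla_{\alpha_j}f}{Q_{ii}+Q_{jj}-2Q_{ij}}$, $I_1=\max(-\alpha_i^k,\alpha_j^k-C/n)$, $I_2=\min(\alpha_j^k,C/n-\alpha_i^k)$, $t^*=\min(\max(I_1,t_q),I_2)$, $\alpha_i^{k+1}=\alpha_i^k+t^*$, $\alpha_j^{k+1}=\alpha_j^k-t^*$. Block $\alpha^*$: the same formulas with $\alpha^*$, $(i^*,j^* )$, $\nabla_{\alpha^*}f$ and the same matrix $Q$. Block $\gamma$: $u\in\arg\min_s\nabla_{\gamma_s}f$, $\gamma_u^{k+1}=\max\big(\gamma_u^k-\nabla_{\gamma_u}f/(AA^T)_{uu},0\big)$.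 Block $\mu$: $u\in\arg\max_s|\nabla_{\mu_s}f|$, $\mu_u^{k+1}=\mu_u^k-\nabla_{\mu_u}f/(\Gamma\Gamma^T)_{uu}$. Clipping. An update in block $\alpha$ or $\alpha^*$ is called clipped if $t^*\neq t_q$; an update in block $\gamma$ is clipped if $\gamma_u^k-\nabla_{\gamma_u}f(\theta^k)/(AA^T)_{uu}<0$; updates in block $\mu$ are never clipped. *)

theory Defs
  imports Complex_Main
begin

(* Indices are 0-based.  X :: nat => nat => real is the n x p data matrix (X i r, i<n, r<p),
   A is k1 x p, G (= Gamma) is k2 x p, y b d are vectors nat => real.
   The dual vector theta = (alpha, alpha*, gamma, mu) is stored as ONE function
   theta :: nat => real with
     alpha_i   = theta i             (i < n)
     alpha*_i  = theta (n + i)       (i < n)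
     gamma_s   = theta (2n + s)      (s < k1)
     mu_s      = theta (2n + k1 + s) (s < k2),
   i.e. exactly the coordinate order of the matrix M with row blocks X, -X, A, -Gamma.
   Coordinates >= 2n+k1+k2 are irrelevant (never read, never changed). *)

definition Mrow :: "nat \<Rightarrow> nat \<Rightarrow> (nat\<Rightarrow>nat\<Rightarrow>real) \<Rightarrow> (nat\<Rightarrow>nat\<Rightarrow>real) \<Rightarrow> (nat\<Rightarrow>nat\<Rightarrow>real)
    \<Rightarrow> nat \<Rightarrow> nat \<Rightarrow> real" where
  "Mrow n k1 X A G i r =
     (if i < n then X i r
      else if i < 2*n then - X (i - n) r
      else if i < 2*n + k1 then A (i - 2*n) r
      else - G (i - 2*n - k1) r)"

definition lvec :: "nat \<Rightarrow> nat \<Rightarrow> (nat\<Rightarrow>real) \<Rightarrow> (nat\<Rightarrow>real) \<Rightarrow> (nat\<Rightarrow>real) \<Rightarrow> nat \<Rightarrow> real" where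
  "lvec n k1 y b d i =
     (if i < n then y i
      else if i < 2*n then - y (i - n)
      else if i < 2*n + k1 then b (i - 2*n)
      else - d (i - 2*n - k1))"

definition gram :: "nat \<Rightarrow> (nat\<Rightarrow>nat\<Rightarrow>real) \<Rightarrow> nat \<Rightarrow> nat \<Rightarrow> real" where
  "gram p M i j = (\<Sum>r<p. M i r * M j r)"

definition fobj :: "nat \<Rightarrow> nat \<Rightarrow> nat \<Rightarrow> nat \<Rightarrow> (nat\<Rightarrow>nat\<Rightarrow>real) \<Rightarrow> (nat\<Rightarrow>real) \<Rightarrow> (nat\<Rightarrow>nat\<Rightarrow>real)
    \<Rightarrow> (nat\<Rightarrow>real) \<Rightarrow> (nat\<Rightarrow>nat\<Rightarrow>real) \<Rightarrow> (nat\<Rightarrow>real) \<Rightarrow> (nat\<Rightarrow>real) \<Rightarrow> real" where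
  "fobj n p k1 k2 X y A b G d \<theta> =
     (1/2) * (\<Sum>i<2*n+k1+k2. \<Sum>j<2*n+k1+k2. \<theta> i * gram p (Mrow n k1 X A G) i j * \<theta> j)
     + (\<Sum>i<2*n+k1+k2. lvec n k1 y b d i * \<theta> i)"

definition grad :: "nat \<Rightarrow> nat \<Rightarrow> nat \<Rightarrow> nat \<Rightarrow> (nat\<Rightarrow>nat\<Rightarrow>real) \<Rightarrow> (nat\<Rightarrow>real) \<Rightarrow> (nat\<Rightarrow>nat\<Rightarrow>real)
    \<Rightarrow> (nat\<Rightarrow>real) \<Rightarrow> (nat\<Rightarrow>nat\<Rightarrow>real) \<Rightarrow> (nat\<Rightarrow>real) \<Rightarrow> (nat\<Rightarrow>real) \<Rightarrow> nat \<Rightarrow> real" where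
  "grad n p k1 k2 X y A b G d \<theta> i =
     (\<Sum>j<2*n+k1+k2. gram p (Mrow n k1 X A G) i j * \<theta> j) + lvec n k1 y b d i"

definition feasible :: "nat \<Rightarrow> nat \<Rightarrow> real \<Rightarrow> real \<Rightarrow> (nat\<Rightarrow>real) \<Rightarrow> bool" where
  "feasible n k1 C \<nu> \<theta> \<longleftrightarrow>
     (\<forall>i<n. 0 \<le> \<theta> i \<and> \<theta> i \<le> C / real n \<and> 0 \<le> \<theta> (n+i) \<and> \<theta> (n+i) \<le> C / real n) \<and>
     (\<Sum>i<n. \<theta> i + \<theta> (n+i)) \<le> C * \<nu> \<and>
     (\<Sum>i<n. \<theta> i - \<theta> (n+i)) = 0 \<and>
     (\<forall>s<k1. 0 \<le> \<theta> (2*n+s))"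

(* I_up and I_low for the block starting at offset off (off = 0: alpha, off = n: alpha* ) *)
definition Iup :: "nat \<Rightarrow> real \<Rightarrow> nat \<Rightarrow> (nat\<Rightarrow>real) \<Rightarrow> nat set" where
  "Iup n C off \<theta> = {i. i < n \<and> \<theta> (off+i) < C / real n}"

definition Ilow :: "nat \<Rightarrow> nat \<Rightarrow> (nat\<Rightarrow>real) \<Rightarrow> nat set" where
  "Ilow n off \<theta> = {i. i < n \<and> 0 < \<theta> (off+i)}"

definition Dpair :: "nat \<Rightarrow> real \<Rightarrow> nat \<Rightarrow> (nat\<Rightarrow>real) \<Rightarrow> (nat\<Rightarrow>real) \<Rightarrow> real" where
  "Dpair n C off g \<theta> =
     (if Iup n C off \<theta> = {} \<or> Ilow n off \<theta> = {} then 0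
      else max (Max ((\<lambda>j. g (off+j)) ` Ilow n off \<theta>) - Min ((\<lambda>i. g (off+i)) ` Iup n C off \<theta>)) 0)"

definition D3 :: "nat \<Rightarrow> nat \<Rightarrow> (nat\<Rightarrow>real) \<Rightarrow> real" where
  "D3 n k1 g = max (- Min ((\<lambda>s. g (2*n+s)) ` {..<k1})) 0"

definition D4 :: "nat \<Rightarrow> nat \<Rightarrow> nat \<Rightarrow> (nat\<Rightarrow>real) \<Rightarrow> real" where
  "D4 n k1 k2 g = Max ((\<lambda>s. \<bar>g (2*n+k1+s)\<bar>) ` {..<k2})"

(* Pair update in block alpha (off = 0) or alpha* (off = n) with matrix Q = XX^T.
   cl is the clipping flag (t* \<noteq> t_q). *)
definition pair_update :: "nat \<Rightarrow> nat \<Rightarrow> real \<Rightarrow> (nat\<Rightarrow>nat\<Rightarrow>real) \<Rightarrow> nat \<Rightarrow> (nat\<Rightarrow>real)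
    \<Rightarrow> (nat\<Rightarrow>real) \<Rightarrow> (nat\<Rightarrow>real) \<Rightarrow> bool \<Rightarrow> bool" where
  "pair_update n p C X off g \<theta> \<theta>' cl \<longleftrightarrow>
     (\<exists>i j. i \<in> Iup n C off \<theta> \<and> (\<forall>i'\<in>Iup n C off \<theta>. g (off+i) \<le> g (off+i')) \<and>
            j \<in> Ilow n off \<theta> \<and> (\<forall>j'\<in>Ilow n off \<theta>. g (off+j') \<le> g (off+j)) \<and>
       (let Q = gram p X;
            tq = - (g (off+i) - g (off+j)) / (Q i i + Q j j - 2 * Q i j);
            I1 = max (- \<theta> (off+i)) (\<theta> (off+j) - C / real n);
            I2 = min (\<theta> (off+j)) (C / real n - \<theta> (off+i));
            ts = min (max I1 tq) I2
        in \<theta>' = \<theta>(off+i := \<theta> (off+i) + ts, off+j := \<theta> (off+j) - ts) \<and> cl = (ts \<noteq> tq)))"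

(* One iteration of the generalized SMO algorithm with tau = 0 that does not stop:
   from theta to theta', with clipping flag cl.  The nondeterministic choices of
   argmin/argmax indices are existentially quantified. *)
definition smo_step :: "nat \<Rightarrow> nat \<Rightarrow> nat \<Rightarrow> nat \<Rightarrow> (nat\<Rightarrow>nat\<Rightarrow>real) \<Rightarrow> (nat\<Rightarrow>real) \<Rightarrow> real
    \<Rightarrow> (nat\<Rightarrow>nat\<Rightarrow>real) \<Rightarrow> (nat\<Rightarrow>real) \<Rightarrow> (nat\<Rightarrow>nat\<Rightarrow>real) \<Rightarrow> (nat\<Rightarrow>real)
    \<Rightarrow> (nat\<Rightarrow>real) \<Rightarrow> (nat\<Rightarrow>real) \<Rightarrow> bool \<Rightarrow> bool" where
  "smo_step n p k1 k2 X y C A b G d \<theta> \<theta>' cl \<longleftrightarrow>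
     (let g = grad n p k1 k2 X y A b G d \<theta>;
          d1 = Dpair n C 0 g \<theta>; d2 = Dpair n C n g \<theta>; d3 = D3 n k1 g; d4 = D4 n k1 k2 g;
          D = max (max d1 d2) (max d3 d4)
      in 0 < D \<and>
         ((d1 = D \<and> pair_update n p C X 0 g \<theta> \<theta>' cl) \<or>
          (d1 \<noteq> D \<and> d2 = D \<and> pair_update n p C X n g \<theta> \<theta>' cl) \<or>
          (d1 \<noteq> D \<and> d2 \<noteq> D \<and> d3 = D \<and>
             (\<exists>u<k1. (\<forall>s<k1. g (2*n+u) \<le> g (2*n+s)) \<and>
                (let v = \<theta> (2*n+u) - g (2*n+u) / gram p A u u
                 in \<theta>' = \<theta>(2*n+u := max v 0) \<and> cl = (v < 0)))) \<or>
          (d1 \<noteq> D \<and> d2 \<noteq> D \<and> d3 \<noteq> D \<and> d4 = D \<and>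
             (\<exists>u<k2. (\<forall>s<k2. \<bar>g (2*n+k1+s)\<bar> \<le> \<bar>g (2*n+k1+u)\<bar>) \<and>
                \<theta>' = \<theta>(2*n+k1+u := \<theta> (2*n+k1+u) - g (2*n+k1+u) / gram p G u u) \<and>
                cl = False))))"

end

theory Submission
  imports Defs "HOL-Library.FuncSet" "HOL-Library.Infinite_Set"
begin

definition boxinv :: "nat \<Rightarrow> nat \<Rightarrow> real \<Rightarrow> (nat \<Rightarrow> real) \<Rightarrow> bool" where
 "boxinv n k1 C \<theta> \<longleftrightarrow> (\<forall>c<2*n. 0 \<le> \<theta> c \<and> \<theta> c \<le> C / real n) \<and> (\<forall>s<k1. 0 \<le> \<theta> (2*n+s))"

definition freeset :: "nat \<Rightarrow> real \<Rightarrow> (nat\<Rightarrow>real) \<Rightarrow> nat set" where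
 "freeset n C \<theta> = {c. c < 2*n \<and> 0 < \<theta> c \<and> \<theta> c < C / real n}"

lemma sum_e:
  fixes h :: "nat \<Rightarrow> real"
  assumes "u < N" "v < N" "u \<noteq> v"
  shows "(\<Sum>i<N. ((if i=u then 1 else 0) - (if i=v then 1 else 0)) * h i) = h u - h v"
proof -
  have "(\<Sum>i<N. ((if i=u then 1 else 0) - (if i=v then 1 else 0)) * h i)
      = (\<Sum>i<N. (if i=u then h i else 0) - (if i=v then h i else 0))"
    by (rule sum.cong) auto
  also have "\<dots> = h u - h v" using assms by (simp add: sum_subtractf)
  finally show ?thesis .
qed

lemma quad:
  fixes Qm :: "nat \<Rightarrow> nat \<Rightarrow> real" and \<theta> :: "nat \<Rightarrow> real"
  assumes sym: "\<And>i j. Qm i j = Qm j i" and ab: "u < N" "v < N" "u \<noteq> v"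
  defines "e \<equiv> \<lambda>j. ((if j=u then 1 else 0) - (if j=v then 1 else 0) :: real)"
  shows "(\<Sum>i<N. \<Sum>j<N. (\<theta> i + t*e i) * Qm i j * (\<theta> j + t*e j))
       = (\<Sum>i<N. \<Sum>j<N. \<theta> i * Qm i j * \<theta> j) + 2*t*((\<Sum>j<N. Qm u j * \<theta> j) - (\<Sum>j<N. Qm v j * \<theta> j))
         + t^2*(Qm u u + Qm v v - 2*Qm u v)"
proof -
  have se: "\<And>h. (\<Sum>i<N. e i * h i) = h u - h v" unfolding e_def using sum_e[OF ab] .
  have exp: "\<And>i j. (\<theta> i + t*e i) * Qm i j * (\<theta> j + t*e j) = \<theta> i * Qm i j * \<theta> j
       + t * (e i * (Qm i j * \<theta> j)) + t * (e j * (Qm j i * \<theta> i)) + t^2 * (e i * (e j * Qm i j))"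
    using sym by (simp add: algebra_simps power2_eq_square)
  have "(\<Sum>i<N. \<Sum>j<N. (\<theta> i + t*e i) * Qm i j * (\<theta> j + t*e j))
      = (\<Sum>i<N. \<Sum>j<N. \<theta> i * Qm i j * \<theta> j) + t * (\<Sum>i<N. e i * (\<Sum>j<N. Qm i j * \<theta> j))
        + t * (\<Sum>i<N. \<Sum>j<N. e j * (Qm j i * \<theta> i)) + t^2 * (\<Sum>i<N. e i * (\<Sum>j<N. e j * Qm i j))"
    unfolding exp by (simp add: sum.distrib sum_distrib_left)
  also have "(\<Sum>i<N. e i * (\<Sum>j<N. Qm i j * \<theta> j)) = (\<Sum>j<N. Qm u j * \<theta> j) - (\<Sum>j<N. Qm v j * \<theta> j)"
    by (rule se)
  also have "(\<Sum>i<N. \<Sum>j<N. e j * (Qm j i * \<theta> i)) = (\<Sum>i<N. Qm u i * \<theta> i - Qm v i * \<theta> i)"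
    by (rule sum.cong) (auto simp: se)
  also have "\<dots> = (\<Sum>j<N. Qm u j * \<theta> j) - (\<Sum>j<N. Qm v j * \<theta> j)"
    by (simp add: sum_subtractf)
  also have "(\<Sum>i<N. e i * (\<Sum>j<N. e j * Qm i j)) = (\<Sum>i<N. e i * (Qm i u - Qm i v))"
    by (simp add: se)
  also have "\<dots> = Qm u u + Qm v v - 2*Qm u v"
    by (simp add: se sym[of v u])
  finally show ?thesis by (simp add: algebra_simps)
qed


lemma gram_sym: "gram p M i j = gram p M j i"
  unfolding gram_def by (simp add: mult.commute)

lemma upd_eq:
  fixes \<theta> :: "nat \<Rightarrow> real"
  assumes "u \<noteq> v"
  shows "\<theta>(u := \<theta> u + t, v := \<theta> v - t) = (\<lambda>j. \<theta> j + t * ((if j=u then 1 else 0) - (if j=v then 1 else 0)))"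
  using assms by (auto simp: fun_eq_iff)

lemma fobj_pair:
  assumes "u < 2*n+k1+k2" "v < 2*n+k1+k2" "u \<noteq> v"
  shows "fobj n p k1 k2 X y A b G d (\<theta>(u := \<theta> u + t, v := \<theta> v - t))
    = fobj n p k1 k2 X y A b G d \<theta> + t * (grad n p k1 k2 X y A b G d \<theta> u - grad n p k1 k2 X y A b G d \<theta> v)
      + t^2/2 * (gram p (Mrow n k1 X A G) u u + gram p (Mrow n k1 X A G) v v - 2 * gram p (Mrow n k1 X A G) u v)"
proof -
  let ?N = "2*n+k1+k2"
  let ?Q = "gram p (Mrow n k1 X A G)"
  define e where "e = (\<lambda>j. ((if j=u then 1 else 0) - (if j=v then 1 else 0) :: real))"
  have q: "(\<Sum>i<?N. \<Sum>j<?N. (\<theta> i + t*e i) * ?Q i j * (\<theta> j + t*e j))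
       = (\<Sum>i<?N. \<Sum>j<?N. \<theta> i * ?Q i j * \<theta> j) + 2*t*((\<Sum>j<?N. ?Q u j * \<theta> j) - (\<Sum>j<?N. ?Q v j * \<theta> j))
         + t^2*(?Q u u + ?Q v v - 2*?Q u v)"
    unfolding e_def by (rule quad[OF gram_sym assms])
  have l: "(\<Sum>i<?N. lvec n k1 y b d i * (\<theta> i + t * e i)) = (\<Sum>i<?N. lvec n k1 y b d i * \<theta> i) + t * (lvec n k1 y b d u - lvec n k1 y b d v)"
  proof -
    have "(\<Sum>i<?N. lvec n k1 y b d i * (\<theta> i + t * e i)) = (\<Sum>i<?N. lvec n k1 y b d i * \<theta> i) + t * (\<Sum>i<?N. e i * lvec n k1 y b d i)"
      by (simp add: algebra_simps sum.distrib sum_distrib_left)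
    also have "(\<Sum>i<?N. e i * lvec n k1 y b d i) = lvec n k1 y b d u - lvec n k1 y b d v"
      unfolding e_def by (rule sum_e[OF assms])
    finally show ?thesis .
  qed
  have eq: "\<theta>(u := \<theta> u + t, v := \<theta> v - t) = (\<lambda>j. \<theta> j + t * e j)"
    unfolding e_def by (rule upd_eq[OF assms(3)])
  have "fobj n p k1 k2 X y A b G d (\<theta>(u := \<theta> u + t, v := \<theta> v - t))
     = (1/2) * (\<Sum>i<?N. \<Sum>j<?N. (\<theta> i + t*e i) * ?Q i j * (\<theta> j + t*e j))
       + (\<Sum>i<?N. lvec n k1 y b d i * (\<theta> i + t * e i))"
    unfolding eq fobj_def ..
  also have "\<dots> = fobj n p k1 k2 X y A b G d \<theta> + t * (grad n p k1 k2 X y A b G d \<theta> u - grad n p k1 k2 X y A b G d \<theta> v)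
      + t^2/2 * (?Q u u + ?Q v v - 2 * ?Q u v)"
    unfolding q l fobj_def grad_def by (simp add: algebra_simps)
  finally show ?thesis .
qed

lemma pu_elim:
  assumes "pair_update n p C X off g \<theta> \<theta>' cl"
  obtains i j tq ts where "i \<in> Iup n C off \<theta>" "\<forall>i'\<in>Iup n C off \<theta>. g (off+i) \<le> g (off+i')"
    "j \<in> Ilow n off \<theta>" "\<forall>j'\<in>Ilow n off \<theta>. g (off+j') \<le> g (off+j)"
    "tq = - (g (off+i) - g (off+j)) / (gram p X i i + gram p X j j - 2 * gram p X i j)"
    "ts = min (max (max (- \<theta> (off+i)) (\<theta> (off+j) - C / real n)) tq) (min (\<theta> (off+j)) (C / real n - \<theta> (off+i)))"
    "\<theta>' = \<theta>(off+i := \<theta> (off+i) + ts, off+j := \<theta> (off+j) - ts)" "cl = (ts \<noteq> tq)"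
  using assms unfolding pair_update_def Let_def by blast

lemma pair_inv:
  assumes inv: "boxinv n k1 C \<theta>" and off: "off = 0 \<or> off = n"
    and pu: "pair_update n p C X off g \<theta> \<theta>' cl"
  shows "boxinv n k1 C \<theta>'"
proof -
  obtain i j tq ts where i: "i \<in> Iup n C off \<theta>" and j: "j \<in> Ilow n off \<theta>"
    and ts: "ts = min (max (max (- \<theta> (off+i)) (\<theta> (off+j) - C / real n)) tq) (min (\<theta> (off+j)) (C / real n - \<theta> (off+i)))"
    and th': "\<theta>' = \<theta>(off+i := \<theta> (off+i) + ts, off+j := \<theta> (off+j) - ts)"
    using pu by (rule pu_elim) blast
  have in_: "i < n" "j < n" using i j by (auto simp: Iup_def Ilow_def)
  have ai: "\<theta>(off+i) < C/real n" using i by (simp add: Iup_def)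
  have aj: "0 < \<theta>(off+j)" using j by (simp add: Ilow_def)
  have lt: "off+i < 2*n" "off+j < 2*n" using off in_ by auto
  have bi: "0 \<le> \<theta>(off+i)" "\<theta>(off+i) \<le> C/real n" "0 \<le> \<theta>(off+j)" "\<theta>(off+j) \<le> C/real n"
    using inv lt by (auto simp: boxinv_def)
  have t1: "- \<theta> (off+i) \<le> ts" "\<theta> (off+j) - C / real n \<le> ts"
    "ts \<le> \<theta> (off+j)" "ts \<le> C / real n - \<theta> (off+i)"
    using ts bi ai aj by (auto simp: min_def max_def)
  show ?thesis
    using inv lt t1 bi unfolding boxinv_def th' by auto
qed

lemma step_inv:
  assumes inv: "boxinv n k1 C \<theta>" and st: "smo_step n p k1 k2 X y C A b G d \<theta> \<theta>' cl"
  shows "boxinv n k1 C \<theta>'"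
proof -
  let ?g = "grad n p k1 k2 X y A b G d \<theta>"
  from st have "pair_update n p C X 0 ?g \<theta> \<theta>' cl \<or> pair_update n p C X n ?g \<theta> \<theta>' cl \<or>
     (\<exists>u<k1. \<theta>' = \<theta>(2*n+u := max (\<theta> (2*n+u) - ?g (2*n+u) / gram p A u u) 0)) \<or>
     (\<exists>u<k2. \<theta>' = \<theta>(2*n+k1+u := \<theta> (2*n+k1+u) - ?g (2*n+k1+u) / gram p G u u))"
    unfolding smo_step_def Let_def by blast
  then show ?thesis
  proof (elim disjE exE conjE)
    assume "pair_update n p C X 0 ?g \<theta> \<theta>' cl" then show ?thesis using pair_inv[OF inv] by blast
  next
    assume "pair_update n p C X n ?g \<theta> \<theta>' cl" then show ?thesis using pair_inv[OF inv] by blast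
  next
    fix u assume "u < k1" "\<theta>' = \<theta>(2*n+u := max (\<theta> (2*n+u) - ?g (2*n+u) / gram p A u u) 0)"
    then show ?thesis using inv by (auto simp: boxinv_def)
  next
    fix u assume "u < k2" "\<theta>' = \<theta>(2*n+k1+u := \<theta> (2*n+k1+u) - ?g (2*n+k1+u) / gram p G u u)"
    then show ?thesis using inv by (auto simp: boxinv_def)
  qed
qed


lemma pair_clipped:
  assumes inv: "boxinv n k1 C \<theta>" and off: "off = 0 \<or> off = n"
    and g: "g = grad n p k1 k2 X y A b G d \<theta>"
    and pos: "\<exists>i'\<in>Iup n C off \<theta>. \<exists>j'\<in>Ilow n off \<theta>. g (off+i') < g (off+j')"
    and rows: "\<forall>i<n. \<forall>j<n. i \<noteq> j \<longrightarrow> (\<exists>r<p. X i r \<noteq> X j r)"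
    and pu: "pair_update n p C X off g \<theta> \<theta>' True"
  shows "\<exists>u v ts. u < 2*n \<and> v < 2*n \<and> u \<noteq> v \<and> \<theta>' = \<theta>(u := \<theta> u + ts, v := \<theta> v - ts) \<and>
           fobj n p k1 k2 X y A b G d \<theta>' < fobj n p k1 k2 X y A b G d \<theta> \<and>
           (freeset n C \<theta>' \<subset> freeset n C \<theta> \<or> (\<theta>' u = \<theta> v \<and> \<theta>' v = \<theta> u))"
proof -
  obtain i j tq ts where i: "i \<in> Iup n C off \<theta>" and imin: "\<forall>i'\<in>Iup n C off \<theta>. g (off+i) \<le> g (off+i')"
    and j: "j \<in> Ilow n off \<theta>" and jmax: "\<forall>j'\<in>Ilow n off \<theta>. g (off+j') \<le> g (off+j)"
    and tq: "tq = - (g (off+i) - g (off+j)) / (gram p X i i + gram p X j j - 2 * gram p X i j)"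
    and ts: "ts = min (max (max (- \<theta> (off+i)) (\<theta> (off+j) - C / real n)) tq) (min (\<theta> (off+j)) (C / real n - \<theta> (off+i)))"
    and th': "\<theta>' = \<theta>(off+i := \<theta> (off+i) + ts, off+j := \<theta> (off+j) - ts)" and cl: "ts \<noteq> tq"
    using pu by (rule pu_elim) blast
  have gij: "g (off+i) < g (off+j)" using pos imin jmax by force
  have ij: "i \<noteq> j" using gij by auto
  have in_: "i < n" "j < n" using i j by (auto simp: Iup_def Ilow_def)
  have ai: "\<theta>(off+i) < C/real n" using i by (simp add: Iup_def)
  have aj: "0 < \<theta>(off+j)" using j by (simp add: Ilow_def)
  have lt: "off+i < 2*n" "off+j < 2*n" using off in_ by auto
  have bi: "0 \<le> \<theta>(off+i)" "\<theta>(off+i) \<le> C/real n" "0 \<le> \<theta>(off+j)" "\<theta>(off+j) \<le> C/real n"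
    using inv lt by (auto simp: boxinv_def)
  define q where "q = gram p X i i + gram p X j j - 2 * gram p X i j"
  have q_eq: "q = (\<Sum>r<p. (X i r - X j r)^2)"
    unfolding q_def gram_def by (simp add: power2_eq_square algebra_simps sum.distrib sum_subtractf sum_distrib_left)
  obtain r where r: "r < p" "X i r \<noteq> X j r" using rows in_ ij by blast
  have qpos: "0 < q" unfolding q_eq
    by (rule sum_pos2[where i=r]) (use r in auto)
  have tqpos: "0 < tq" using tq gij qpos unfolding q_def[symmetric] by (simp add: divide_pos_pos)
  have tsI2: "ts = min (\<theta> (off+j)) (C / real n - \<theta> (off+i))" and tslt: "ts < tq"
    using ts cl bi tqpos by (auto simp: min_def max_def)
  have tspos: "0 < ts" using tsI2 ai aj by simp
  have Mg: "\<And>s t. s < n \<Longrightarrow> t < n \<Longrightarrow> gram p (Mrow n k1 X A G) (off+s) (off+t) = gram p X s t"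
    using off by (auto simp: gram_def Mrow_def)
  have offij: "off+i \<noteq> off+j" using ij by simp
  have fe: "fobj n p k1 k2 X y A b G d \<theta>' = fobj n p k1 k2 X y A b G d \<theta> + ts * (g (off+i) - g (off+j)) + ts^2/2 * q"
    unfolding th' g using lt offij
    by (subst fobj_pair) (auto simp: Mg in_ q_def)
  define \<delta> where "\<delta> = g (off+j) - g (off+i)"
  have dpos: "0 < \<delta>" using gij \<delta>_def by simp
  have tq2: "tq * q = \<delta>" using tq qpos \<delta>_def q_def by simp
  have "ts * q < \<delta>" using tslt qpos tq2 by (metis mult_strict_right_mono)
  then have "(g (off+i) - g (off+j)) + ts * q / 2 < 0" using dpos \<delta>_def by simp
  then have "ts * ((g (off+i) - g (off+j)) + ts * q / 2) < 0" using tspos by (simp add: mult_pos_neg)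
  then have fdec: "fobj n p k1 k2 X y A b G d \<theta>' < fobj n p k1 k2 X y A b G d \<theta>"
    unfolding fe by (simp add: algebra_simps power2_eq_square)
  have th'u: "\<theta>' (off+i) = \<theta> (off+i) + ts" and th'v: "\<theta>' (off+j) = \<theta> (off+j) - ts"
    and th'o: "\<And>c. c \<noteq> off+i \<Longrightarrow> c \<noteq> off+j \<Longrightarrow> \<theta>' c = \<theta> c"
    using th' offij by auto
  have fr: "freeset n C \<theta>' \<subset> freeset n C \<theta> \<or> (\<theta>' (off+i) = \<theta> (off+j) \<and> \<theta>' (off+j) = \<theta> (off+i))"
  proof (cases "\<theta> (off+i) = 0")
    case True
    then have "ts = \<theta> (off+j)" using tsI2 bi by simp
    then show ?thesis using th'u th'v True by simp
  next
    case F1: False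
    show ?thesis
    proof (cases "\<theta> (off+j) = C / real n")
      case True
      then have "ts = C / real n - \<theta> (off+i)" using tsI2 bi by simp
      then show ?thesis using th'u th'v True by simp
    next
      case F2: False
      have ui: "off+i \<in> freeset n C \<theta>" "off+j \<in> freeset n C \<theta>"
        using F1 F2 bi ai aj lt unfolding freeset_def by auto
      have sub: "freeset n C \<theta>' \<subseteq> freeset n C \<theta>"
      proof
        fix c assume c: "c \<in> freeset n C \<theta>'"
        show "c \<in> freeset n C \<theta>"
        proof (cases "c = off+i \<or> c = off+j")
          case True then show ?thesis using ui by auto
        next
          case False then show ?thesis using c th'o unfolding freeset_def by auto
        qed
      qed
      have "off+j \<notin> freeset n C \<theta>' \<or> off+i \<notin> freeset n C \<theta>'"
      proof (cases "ts = \<theta> (off+j)")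
        case True then show ?thesis using th'v unfolding freeset_def by auto
      next
        case False
        then have "ts = C / real n - \<theta> (off+i)" using tsI2 by (auto simp: min_def)
        then show ?thesis using th'u unfolding freeset_def by auto
      qed
      then show ?thesis using sub ui by blast
    qed
  qed
  show ?thesis
    using lt offij th' fdec fr by blast
qed


lemma Dpair_pos:
  assumes "0 < Dpair n C off g \<theta>"
  shows "\<exists>i'\<in>Iup n C off \<theta>. \<exists>j'\<in>Ilow n off \<theta>. g (off+i') < g (off+j')"
proof -
  have ne: "Iup n C off \<theta> \<noteq> {}" "Ilow n off \<theta> \<noteq> {}" using assms by (auto simp: Dpair_def split: if_splits)
  have fin: "finite (Iup n C off \<theta>)" "finite (Ilow n off \<theta>)" by (auto simp: Iup_def Ilow_def)
  have lt: "Min ((\<lambda>i. g (off+i)) ` Iup n C off \<theta>) < Max ((\<lambda>j. g (off+j)) ` Ilow n off \<theta>)"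
    using assms ne by (auto simp: Dpair_def max_def split: if_splits)
  have "Min ((\<lambda>i. g (off+i)) ` Iup n C off \<theta>) \<in> (\<lambda>i. g (off+i)) ` Iup n C off \<theta>"
    by (rule Min_in) (use fin ne in auto)
  then obtain i' where "i' \<in> Iup n C off \<theta>" "g (off+i') = Min ((\<lambda>i. g (off+i)) ` Iup n C off \<theta>)"
    by auto
  moreover have "Max ((\<lambda>j. g (off+j)) ` Ilow n off \<theta>) \<in> (\<lambda>j. g (off+j)) ` Ilow n off \<theta>"
    by (rule Max_in) (use fin ne in auto)
  then obtain j' where "j' \<in> Ilow n off \<theta>" "g (off+j') = Max ((\<lambda>j. g (off+j)) ` Ilow n off \<theta>)"
    by auto
  ultimately show ?thesis using lt by metis
qed

lemma step_clipped:
  assumes inv: "boxinv n k1 C \<theta>" and st: "smo_step n p k1 k2 X y C A b G d \<theta> \<theta>' True"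
    and rows: "\<forall>i<n. \<forall>j<n. i \<noteq> j \<longrightarrow> (\<exists>r<p. X i r \<noteq> X j r)" and k1: "1 \<le> k1"
  shows "\<exists>u v ts. u < 2*n \<and> v < 2*n \<and> u \<noteq> v \<and> \<theta>' = \<theta>(u := \<theta> u + ts, v := \<theta> v - ts) \<and>
           fobj n p k1 k2 X y A b G d \<theta>' < fobj n p k1 k2 X y A b G d \<theta> \<and>
           (freeset n C \<theta>' \<subset> freeset n C \<theta> \<or> (\<theta>' u = \<theta> v \<and> \<theta>' v = \<theta> u))"
proof -
  let ?g = "grad n p k1 k2 X y A b G d \<theta>"
  from st have "(0 < Dpair n C 0 ?g \<theta> \<and> pair_update n p C X 0 ?g \<theta> \<theta>' True) \<or>
     (0 < Dpair n C n ?g \<theta> \<and> pair_update n p C X n ?g \<theta> \<theta>' True) \<or>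
     (0 < D3 n k1 ?g \<and> (\<exists>u<k1. (\<forall>s<k1. ?g (2*n+u) \<le> ?g (2*n+s)) \<and>
         \<theta> (2*n+u) - ?g (2*n+u) / gram p A u u < 0))"
    unfolding smo_step_def Let_def by (elim conjE disjE) auto
  then show ?thesis
  proof (elim disjE exE conjE)
    assume "0 < Dpair n C 0 ?g \<theta>" "pair_update n p C X 0 ?g \<theta> \<theta>' True"
    then show ?thesis using pair_clipped[OF inv _ refl Dpair_pos rows] by blast
  next
    assume "0 < Dpair n C n ?g \<theta>" "pair_update n p C X n ?g \<theta> \<theta>' True"
    then show ?thesis using pair_clipped[OF inv _ refl Dpair_pos rows] by blast
  next
    fix u assume d3: "0 < D3 n k1 ?g" and u: "u < k1" and umin: "\<forall>s<k1. ?g (2*n+u) \<le> ?g (2*n+s)"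
      and neg: "\<theta> (2*n+u) - ?g (2*n+u) / gram p A u u < 0"
    have ne: "(\<lambda>s. ?g (2*n+s)) ` {..<k1} \<noteq> {}"
    proof -
      have "0 \<in> {..<k1}" using k1 by simp
      then show ?thesis by blast
    qed
    obtain s0 where s0: "s0 < k1" "?g (2*n+s0) = Min ((\<lambda>s. ?g (2*n+s)) ` {..<k1})"
      using Min_in[OF _ ne] by auto
    have "Min ((\<lambda>s. ?g (2*n+s)) ` {..<k1}) < 0" using d3 by (auto simp: D3_def max_def split: if_splits)
    then have gneg: "?g (2*n+u) < 0" using umin s0 by force
    have qnn: "0 \<le> gram p A u u" unfolding gram_def by (simp add: sum_nonneg)
    have "?g (2*n+u) / gram p A u u \<le> 0" using gneg qnn by (simp add: divide_nonpos_nonneg)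
    moreover have "0 \<le> \<theta> (2*n+u)" using inv u by (simp add: boxinv_def)
    ultimately show ?thesis using neg by linarith
  qed
qed


lemma swap_card:
  fixes \<theta> \<theta>' :: "nat \<Rightarrow> real"
  assumes "u<2*n" "v<2*n" "u\<noteq>v" "\<theta>' u = \<theta> v" "\<theta>' v = \<theta> u" "\<And>c. c\<noteq>u \<Longrightarrow> c\<noteq>v \<Longrightarrow> \<theta>' c = \<theta> c"
  shows "card (freeset n C \<theta>') = card (freeset n C \<theta>)"
proof -
  define sw where "sw = (\<lambda>c::nat. if c = u then v else if c = v then u else c)"
  have "bij_betw sw (freeset n C \<theta>') (freeset n C \<theta>)"
  proof (rule bij_betw_imageI)
    show "inj_on sw (freeset n C \<theta>')" unfolding inj_on_def sw_def using assms(3) by auto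
    show "sw ` freeset n C \<theta>' = freeset n C \<theta>"
    proof
      show "sw ` freeset n C \<theta>' \<subseteq> freeset n C \<theta>" using assms unfolding sw_def freeset_def by auto
      show "freeset n C \<theta> \<subseteq> sw ` freeset n C \<theta>'"
      proof
        fix x assume x: "x \<in> freeset n C \<theta>"
        have "sw x \<in> freeset n C \<theta>'" using x assms unfolding sw_def freeset_def by auto
        moreover have "sw (sw x) = x" unfolding sw_def by auto
        ultimately show "x \<in> sw ` freeset n C \<theta>'" by (metis image_eqI)
      qed
    qed
  qed
  then show ?thesis by (rule bij_betw_same_card)
qed

lemma feas_box:
  assumes "feasible n k1 C \<nu> \<theta>"
  shows "boxinv n k1 C \<theta>"
proof -
  have A: "0 \<le> \<theta> c \<and> \<theta> c \<le> C / real n" if c: "c < 2*n" for c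
  proof (cases "c < n")
    case True then show ?thesis using assms by (auto simp: feasible_def)
  next
    case False
    then have "c = n + (c - n)" "c - n < n" using c by auto
    then show ?thesis using assms unfolding feasible_def by metis
  qed
  have B: "\<forall>s<k1. 0 \<le> \<theta> (2*n+s)" using assms by (auto simp: feasible_def)
  show ?thesis unfolding boxinv_def using A B by blast
qed

theorem lemmaD3:
  fixes n p k1 k2 :: nat
    and X A G :: "nat \<Rightarrow> nat \<Rightarrow> real"
    and y b d :: "nat \<Rightarrow> real"
    and C \<nu> :: real
    and \<theta> :: "nat \<Rightarrow> nat \<Rightarrow> real"
    and cl :: "nat \<Rightarrow> bool"
  assumes "1 \<le> n" "1 \<le> p" "1 \<le> k1" "1 \<le> k2"
    and "0 < C" "0 < \<nu>" "\<nu> \<le> 1"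
    and "\<forall>i<n. \<forall>j<n. i \<noteq> j \<longrightarrow> (\<exists>r<p. X i r \<noteq> X j r)"
    and "\<forall>s<k1. \<exists>r<p. A s r \<noteq> 0"
    and "\<forall>s<k2. \<exists>r<p. G s r \<noteq> 0"
    and "feasible n k1 C \<nu> (\<theta> 0)"
    and "\<forall>k. smo_step n p k1 k2 X y C A b G d (\<theta> k) (\<theta> (Suc k)) (cl k)"
  shows "infinite {k. \<not> cl k}"
proof
  assume fin: "finite {k. \<not> cl k}"
  obtain K where K: "\<And>k. K \<le> k \<Longrightarrow> cl k"
  proof -
    obtain K where Kb: "\<forall>k\<in>{k. \<not> cl k}. k < K" using fin finite_nat_set_iff_bounded by blast
    show ?thesis
    proof (rule that)
      fix k assume "K \<le> k" then show "cl k" using Kb by force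
    qed
  qed
  let ?f = "\<lambda>k. fobj n p k1 k2 X y A b G d (\<theta> k)"
  let ?m = "\<lambda>k. card (freeset n C (\<theta> k))"
  have inv: "boxinv n k1 C (\<theta> k)" for k
  proof (induction k)
    case 0 show ?case using assms(11) by (rule feas_box)
  next
    case (Suc k) then show ?case using step_inv assms(12) by blast
  qed
  have finfree: "finite (freeset n C h)" for h
    by (rule finite_subset[of _ "{..<2*n}"]) (auto simp: freeset_def)
  have stepK: "?f (Suc k) < ?f k \<and> ?m (Suc k) \<le> ?m k \<and>
      (?m (Suc k) = ?m k \<longrightarrow> (\<exists>u v. u < 2*n \<and> v < 2*n \<and> u \<noteq> v \<and> \<theta> (Suc k) u = \<theta> k v \<and>
          \<theta> (Suc k) v = \<theta> k u \<and> (\<forall>c. c \<noteq> u \<and> c \<noteq> v \<longrightarrow> \<theta> (Suc k) c = \<theta> k c)))"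
    if k: "K \<le> k" for k
  proof -
    have "smo_step n p k1 k2 X y C A b G d (\<theta> k) (\<theta> (Suc k)) True"
      using assms(12) K[OF k] by metis
    from step_clipped[OF inv this assms(8) assms(3)]
    obtain u v ts where uv: "u < 2*n" "v < 2*n" "u \<noteq> v"
      and th: "\<theta> (Suc k) = (\<theta> k)(u := \<theta> k u + ts, v := \<theta> k v - ts)"
      and fd: "?f (Suc k) < ?f k"
      and fr: "freeset n C (\<theta> (Suc k)) \<subset> freeset n C (\<theta> k) \<or> (\<theta> (Suc k) u = \<theta> k v \<and> \<theta> (Suc k) v = \<theta> k u)"
      by blast
    have oth: "\<forall>c. c \<noteq> u \<and> c \<noteq> v \<longrightarrow> \<theta> (Suc k) c = \<theta> k c" using th by auto
    show ?thesis
    proof (cases "freeset n C (\<theta> (Suc k)) \<subset> freeset n C (\<theta> k)")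
      case True
      then have "?m (Suc k) < ?m k" by (rule psubset_card_mono[OF finfree])
      then show ?thesis using fd by simp
    next
      case False
      then have sw: "\<theta> (Suc k) u = \<theta> k v \<and> \<theta> (Suc k) v = \<theta> k u" using fr by blast
      have "?m (Suc k) = ?m k"
        by (rule swap_card[OF uv]) (use sw oth in auto)
      then show ?thesis using fd sw oth uv by (intro conjI impI exI[of _ u] exI[of _ v]) auto
    qed
  qed
  define v0 where "v0 = (LEAST x. \<exists>k\<ge>K. ?m k = x)"
  have "\<exists>k\<ge>K. ?m k = v0" unfolding v0_def by (rule LeastI_ex) blast
  then obtain K' where K': "K \<le> K'" "?m K' = v0" by blast
  have v0le: "v0 \<le> ?m k" if "K \<le> k" for k unfolding v0_def
    by (rule Least_le) (use that in blast)
  have mle: "?m k \<le> ?m K'" if "K' \<le> k" for k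
    using that
  proof (induction k rule: dec_induct)
    case base then show ?case by simp
  next
    case (step k) then show ?case using stepK[of k] K' by linarith
  qed
  have meq: "?m (Suc k) = ?m k" if "K' \<le> k" for k
    using mle[of k] mle[of "Suc k"] v0le[of k] v0le[of "Suc k"] K' that by simp
  define V where "V = \<theta> K' ` {..<2*n}"
  have P: "(\<forall>c<2*n. \<theta> k c \<in> V) \<and> (\<forall>c. \<not> c < 2*n \<longrightarrow> \<theta> k c = \<theta> K' c)" if "K' \<le> k" for k
    using that
  proof (induction k rule: dec_induct)
    case base then show ?case unfolding V_def by auto
  next
    case (step k)
    then obtain u v where uv: "u < 2*n" "v < 2*n" "u \<noteq> v" "\<theta> (Suc k) u = \<theta> k v"
          "\<theta> (Suc k) v = \<theta> k u" "\<forall>c. c \<noteq> u \<and> c \<noteq> v \<longrightarrow> \<theta> (Suc k) c = \<theta> k c"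
      using stepK[of k] meq[of k] K' by auto
    show ?case
    proof (intro conjI allI impI)
      fix c assume c: "c < 2*n"
      show "\<theta> (Suc k) c \<in> V"
        using step.IH uv c by (cases "c = u"; cases "c = v") auto
    next
      fix c assume c: "\<not> c < 2*n"
      then have "c \<noteq> u" "c \<noteq> v" using uv by auto
      then show "\<theta> (Suc k) c = \<theta> K' c" using step.IH uv c by auto
    qed
  qed
  define S where "S = (\<lambda>h c. if c < 2*n then h c else \<theta> K' c) ` (PiE {..<2*n} (\<lambda>_. V))"
  have finS: "finite S" unfolding S_def V_def by (intro finite_imageI finite_PiE) auto
  have rS: "range (\<lambda>k. \<theta> (K'+k)) \<subseteq> S"
  proof
    fix h assume "h \<in> range (\<lambda>k. \<theta> (K'+k))"
    then obtain k where h: "h = \<theta> (K'+k)" by blast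
    have Pk: "(\<forall>c<2*n. h c \<in> V) \<and> (\<forall>c. \<not> c < 2*n \<longrightarrow> h c = \<theta> K' c)" using P[of "K'+k"] h by simp
    have "restrict h {..<2*n} \<in> PiE {..<2*n} (\<lambda>_. V)" using Pk by (auto simp: restrict_PiE_iff)
    moreover have "h = (\<lambda>c. if c < 2*n then restrict h {..<2*n} c else \<theta> K' c)"
      using Pk by (auto simp: fun_eq_iff)
    ultimately show "h \<in> S" unfolding S_def by blast
  qed
  have dec: "?f (K'+j) < ?f (K'+i)" if "i < j" for i j
  proof -
    have "(\<lambda>k. - ?f (K'+k)) i < (\<lambda>k. - ?f (K'+k)) j"
      by (rule lift_Suc_mono_less[OF _ that]) (use stepK K' in auto)
    then show ?thesis by simp
  qed
  have "inj (\<lambda>k. \<theta> (K'+k))"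
  proof (rule injI)
    fix i j assume e: "\<theta> (K'+i) = \<theta> (K'+j)"
    show "i = j"
    proof (rule ccontr)
      assume "i \<noteq> j"
      then consider "i < j" | "j < i" by linarith
      then show False using dec e by (metis less_irrefl)
    qed
  qed
  then have "infinite (range (\<lambda>k. \<theta> (K'+k)))" by (rule range_inj_infinite)
  then show False using finS rS finite_subset by blast
qed

end
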